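(* Let $a\in\mathcal{S}(X^{\ast})$, $b\in\mathcal{S}(X)$ and $c\in\mathcal{S}^\infty(X\times X)$. For $\tau\in\operatorname{End}_{\mathbb{R}}(X)$ define $\mathcal{K}(x,y;\tau)=c(x,y)\,b(x-y)\,\mathcal{F}^{-1}a((1-\tau)x+\tau y)$, $(x,y)\in X\times X$. Then $\mathcal{K}(\cdot,\cdot;\tau)\in L^2(X\times X)$ for every $\tau$, and the mapping $\operatorname{End}_{\mathbb{R}}(X)\ni\tau\mapsto\mathcal{K}(\cdot,\cdot;\tau)\in L^2(X\times X)$ is continuous.
   Context: $X$ is a real Euclidean space of dimension $n$, $X^{\ast}$ its dual; $X\times X$ carries the product Euclidean structure; $\langle v\rangle=(1+|v|^2)^{1/2}$. $\mathcal{S}$ denotes Schwartz spaces. For a Euclidean space $V$, $\mathcal{S}^m(V)$ is the space of $f\in\mathcal{C}^\infty(V)$ with $|\partial^\alpha f(v)|\le C_\alpha\langle v\rangle^{m-|\alpha|}$ for all multi-indices $\alpha$, and $\mathcal{S}^\infty(V)=\bigcup_{m\in\mathbb{R}}\mathcal{S}^m(V)$. $\mathcal{F}^{-1}$ is the inverse Fourier transform from $X^{\ast}$ to $X$. *)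

theory Defs
  imports "HOL-Analysis.Analysis"
begin

text \<open>Iterated directional (Frechet) derivatives along a list of directions.
  A multi-index alpha corresponds to a list of basis vectors.\<close>
fun iter_deriv :: "'a::real_normed_vector list \<Rightarrow> ('a \<Rightarrow> 'b::real_normed_vector) \<Rightarrow> 'a \<Rightarrow> 'b" where
  "iter_deriv [] f = f"
| "iter_deriv (v # vs) f = (\<lambda>x. frechet_derivative (iter_deriv vs f) (at x) v)"

definition smooth_fun :: "('a::euclidean_space \<Rightarrow> 'b::real_normed_vector) \<Rightarrow> bool" where
  "smooth_fun f \<longleftrightarrow> (\<forall>vs. set vs \<subseteq> Basis \<longrightarrow> (\<forall>x. iter_deriv vs f differentiable (at x)))"

definition jbr :: "'a::real_normed_vector \<Rightarrow> real" where
  "jbr v = sqrt (1 + (norm v)\<^sup>2)"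

definition schwartz :: "('a::euclidean_space \<Rightarrow> complex) set" where
  "schwartz = {f. smooth_fun f \<and>
     (\<forall>vs. set vs \<subseteq> Basis \<longrightarrow> (\<forall>N::nat. \<exists>C. \<forall>x. jbr x ^ N * norm (iter_deriv vs f x) \<le> C))}"

definition symbol_class :: "real \<Rightarrow> ('a::euclidean_space \<Rightarrow> complex) set" where
  "symbol_class m = {f. smooth_fun f \<and>
     (\<forall>vs. set vs \<subseteq> Basis \<longrightarrow> (\<exists>C. \<forall>v. norm (iter_deriv vs f v) \<le> C * jbr v powr (m - real (length vs))))}"

definition symbol_class_inf :: "('a::euclidean_space \<Rightarrow> complex) set" where
  "symbol_class_inf = (\<Union>m. symbol_class m)"

text \<open>Inverse Fourier transform from \<open>X*\<close> to \<open>X\<close>; \<open>X*\<close> is identified with \<open>X\<close>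
  via the inner product, the pairing being \<open>x \<bullet> \<xi>\<close>.\<close>
definition inv_fourier :: "('a::euclidean_space \<Rightarrow> complex) \<Rightarrow> 'a \<Rightarrow> complex" where
  "inv_fourier a x = (LINT \<xi>|lborel. exp (\<i> * complex_of_real (x \<bullet> \<xi>)) * a \<xi>) / complex_of_real ((2 * pi) ^ DIM('a))"

definition kernelK :: "('a::euclidean_space \<Rightarrow> complex) \<Rightarrow> ('a \<Rightarrow> complex) \<Rightarrow> ('a \<times> 'a \<Rightarrow> complex)
    \<Rightarrow> ('a \<Rightarrow>\<^sub>L 'a) \<Rightarrow> 'a \<times> 'a \<Rightarrow> complex" where
  "kernelK a b c \<tau> z = (case z of (x, y) \<Rightarrow>
      c (x, y) * b (x - y) * inv_fourier a ((x - \<tau> x) + \<tau> y))"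

definition L2 :: "('a::euclidean_space \<Rightarrow> complex) \<Rightarrow> bool" where
  "L2 f \<longleftrightarrow> f \<in> borel_measurable lborel \<and> integrable lborel (\<lambda>z. (norm (f z))\<^sup>2)"

definition L2_dist :: "('a::euclidean_space \<Rightarrow> complex) \<Rightarrow> ('a \<Rightarrow> complex) \<Rightarrow> real" where
  "L2_dist f g = sqrt (LINT z|lborel. (norm (f z - g z))\<^sup>2)"

end

theory Submission
  imports Defs
begin
lemma one_plus_sq_ne0[simp]: "1 + (x::real)\<^sup>2 \<noteq> 0"
  by (metis add_pos_nonneg less_numeral_extra(1) zero_le_power2 less_irrefl)

lemma inv1sq_nn: "(\<integral>\<^sup>+t. ennreal (inverse (1 + t\<^sup>2)) \<partial>lborel) < \<infinity>"
proof -
  have "set_integrable lborel (einterval (-\<infinity>) \<infinity>) (\<lambda>t::real. inverse (1 + t\<^sup>2))"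
  proof (rule interval_integral_FTC_nonneg(1)[where F=arctan and A="-(pi/2)" and B="pi/2"])
    show "\<And>x. - \<infinity> < ereal x \<Longrightarrow> ereal x < \<infinity> \<Longrightarrow> DERIV arctan x :> inverse (1 + x\<^sup>2)"
      by (auto intro!: derivative_eq_intros simp: field_simps power2_eq_square)
    show "\<And>x. - \<infinity> < ereal x \<Longrightarrow> ereal x < \<infinity> \<Longrightarrow> isCont (\<lambda>t. inverse (1 + t\<^sup>2)) x"
      by (auto intro!: continuous_intros simp: add_pos_nonneg)
    show "((arctan \<circ> real_of_ereal) \<longlongrightarrow> - (pi / 2)) (at_right (- \<infinity>))"
      by (simp add: ereal_tendsto_simps tendsto_arctan_at_bot)
    show "((arctan \<circ> real_of_ereal) \<longlongrightarrow> (pi / 2)) (at_left \<infinity>)"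
      by (simp add: ereal_tendsto_simps tendsto_arctan_at_top)
  qed auto
  then have "integrable lborel (\<lambda>t::real. inverse (1 + t\<^sup>2))"
    by (simp add: set_integrable_def)
  then show ?thesis
    by (subst (asm) integrable_iff_bounded) (auto simp: add_pos_nonneg)
qed

definition wt :: "'c::euclidean_space \<Rightarrow> real" where
  "wt z = inverse ((1 + (norm z)\<^sup>2) ^ DIM('c))"

lemma wt_pos: "wt z > 0" unfolding wt_def by (simp add: add_pos_nonneg)

lemma wt_le_prod: "wt (z::'c::euclidean_space) \<le> (\<Prod>b\<in>Basis. inverse (1 + (z \<bullet> b)\<^sup>2))"
proof -
  have "(\<Prod>b\<in>(Basis::'c set). (1 + (z \<bullet> b)\<^sup>2)) \<le> (\<Prod>b\<in>(Basis::'c set). (1 + (norm z)\<^sup>2))"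
  proof (rule prod_mono)
    fix b :: 'c assume "b \<in> Basis"
    then have "\<bar>z \<bullet> b\<bar> \<le> norm z" by (simp add: Basis_le_norm)
    then have "(z \<bullet> b)\<^sup>2 \<le> (norm z)\<^sup>2" by (metis abs_ge_zero power2_abs power_mono)
    then show "0 \<le> 1 + (z \<bullet> b)\<^sup>2 \<and> 1 + (z \<bullet> b)\<^sup>2 \<le> 1 + (norm z)\<^sup>2" by simp
  qed
  then have "inverse (\<Prod>b\<in>(Basis::'c set). (1 + (norm z)\<^sup>2)) \<le> inverse (\<Prod>b\<in>(Basis::'c set). (1 + (z \<bullet> b)\<^sup>2))"
    by (intro le_imp_inverse_le) (auto intro!: prod_pos simp: add_pos_nonneg)
  then show ?thesis unfolding wt_def by (simp add: prod_inversef[symmetric])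
qed

lemma wt_integrable: "integrable lborel (wt :: 'c::euclidean_space \<Rightarrow> real)"
proof -
  have m: "wt \<in> borel_measurable (borel :: 'c measure)"
    unfolding wt_def by (intro borel_measurable_continuous_onI continuous_intros) (auto simp: add_pos_nonneg)
  have "(\<integral>\<^sup>+z. ennreal (norm (wt z)) \<partial>(lborel::'c measure)) \<le> (\<integral>\<^sup>+z. ennreal (\<Prod>b\<in>Basis. inverse (1 + (z \<bullet> b)\<^sup>2)) \<partial>(lborel::'c measure))"
    proof (rule nn_integral_mono)
    fix z :: 'c
    show "ennreal (norm (wt z)) \<le> ennreal (\<Prod>b\<in>Basis. inverse (1 + (z \<bullet> b)\<^sup>2))"
      using wt_pos[of z] wt_le_prod[of z] by (intro ennreal_leI) simp
  qed
  also have "\<dots> = (\<integral>\<^sup>+z. (\<Prod>b\<in>(Basis::'c set). ennreal (inverse (1 + (z \<bullet> b)\<^sup>2))) \<partial>lborel)"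
    by (intro nn_integral_cong) (simp add: prod_ennreal add_pos_nonneg)
  also have "\<dots> = (\<Prod>b\<in>(Basis::'c set). (\<integral>\<^sup>+t. ennreal (inverse (1 + t\<^sup>2)) \<partial>lborel))"
    by (rule nn_integral_lborel_prod) auto
  also have "\<dots> < \<infinity>" using inv1sq_nn by (simp add: power_less_top_ennreal) 
  finally show ?thesis using m by (simp add: integrable_iff_bounded)
qed

lemma mvt_vec:
  fixes f f' :: "real \<Rightarrow> complex"
  assumes d: "\<And>r. (f has_vector_derivative f' r) (at r)"
    and B: "\<And>r. r \<in> {a..b} \<Longrightarrow> norm (f' r) \<le> B" and x: "x \<in> {a..b}" and y: "y \<in> {a..b}"
  shows "norm (f x - f y) \<le> B * \<bar>x - y\<bar>"
proof -
  have "norm (f x - f y) \<le> B * norm (x - y)"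
  proof (rule differentiable_bound[where S="{a..b}" and f'="\<lambda>r t. t *\<^sub>R f' r"])
    show "(f has_derivative (\<lambda>t. t *\<^sub>R f' r)) (at r within {a..b})" if "r \<in> {a..b}" for r
      using d[of r] unfolding has_vector_derivative_def by (rule has_derivative_at_withinI)
    show "onorm (\<lambda>t. t *\<^sub>R f' r) \<le> B" if "r \<in> {a..b}" for r
      using B[OF that] by (simp add: onorm_scaleR_left[OF bounded_linear_ident] onorm_id)
  qed (use x y in auto)
  then show ?thesis by simp
qed

lemma hvd_shift:
  assumes "(f has_vector_derivative D) (at (r + h))"
  shows "((\<lambda>x. f (x + h)) has_vector_derivative D) (at r)"
proof -
  have "((\<lambda>x. x + h) has_vector_derivative 1) (at r)"
    by (auto intro!: derivative_eq_intros)
  from vector_diff_chain_at[OF this assms] show ?thesis by (simp add: o_def)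
qed

fun fd :: "nat \<Rightarrow> real \<Rightarrow> (real \<Rightarrow> complex) \<Rightarrow> complex" where
  "fd 0 h f = f 0"
| "fd (Suc k) h f = fd k h (\<lambda>r. f r - f (r + h))"

lemma fd_bound:
  fixes f :: "nat \<Rightarrow> real \<Rightarrow> complex"
  assumes "\<And>j r. j < k \<Longrightarrow> (f j has_vector_derivative f (Suc j) r) (at r)"
    and "\<And>r. \<bar>r\<bar> \<le> real k * \<bar>h\<bar> \<Longrightarrow> norm (f k r) \<le> M"
  shows "norm (fd k h (f 0)) \<le> M * \<bar>h\<bar> ^ k"
  using assms
proof (induction k arbitrary: f M)
  case 0
  then show ?case by simp
next
  case (Suc k)
  define g where "g j r = f j r - f j (r + h)" for j r
  have "norm (fd k h (g 0)) \<le> (M * \<bar>h\<bar>) * \<bar>h\<bar> ^ k"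
  proof (rule Suc.IH)
    fix j r assume "j < k"
    then show "(g j has_vector_derivative g (Suc j) r) (at r)"
      unfolding g_def using \<open>j < k\<close>
      by (intro has_vector_derivative_diff hvd_shift Suc.prems(1)) simp_all
  next
    fix r assume r: "\<bar>r\<bar> \<le> real k * \<bar>h\<bar>"
    let ?a = "- (real (Suc k) * \<bar>h\<bar>)" and ?b = "real (Suc k) * \<bar>h\<bar>"
    have "norm (f k r - f k (r + h)) \<le> M * \<bar>r - (r + h)\<bar>"
    proof (rule mvt_vec[where a="?a" and b="?b"])
      show "(f k has_vector_derivative f (Suc k) \<rho>) (at \<rho>)" for \<rho> using Suc.prems(1)[of k] by simp
      show "norm (f (Suc k) \<rho>) \<le> M" if "\<rho> \<in> {?a..?b}" for \<rho>
        using that by (intro Suc.prems(2)) auto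
      show "r \<in> {?a..?b}" using r by (auto simp: algebra_simps)
      show "r + h \<in> {?a..?b}" using r by (auto simp: algebra_simps)
    qed
    then show "norm (g k r) \<le> M * \<bar>h\<bar>" by (simp add: g_def)
  qed
  moreover have "fd (Suc k) h (f 0) = fd k h (g 0)" by (simp add: g_def[abs_def])
  ultimately show ?case by (simp add: algebra_simps)
qed

lemma lborel_shift:
  fixes g :: "'a::euclidean_space \<Rightarrow> complex"
  assumes "integrable lborel g"
  shows "integrable lborel (\<lambda>\<xi>. g (v + \<xi>))" "(LINT \<xi>|lborel. g (v + \<xi>)) = (LINT \<xi>|lborel. g \<xi>)"
proof -
  have gm: "g \<in> borel_measurable borel" using borel_measurable_integrable[OF assms] by simp
  have pm: "(+) v \<in> measurable lborel borel" by simp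
  have "integrable (distr lborel borel ((+) v)) g" using assms by (simp add: lborel_distr_plus)
  then show "integrable lborel (\<lambda>\<xi>. g (v + \<xi>))" using integrable_distr_eq[OF pm gm] by simp
  have "(LINT \<xi>|lborel. g (v + \<xi>)) = integral\<^sup>L (distr lborel borel ((+) v)) g"
    using integral_distr[OF pm gm] by simp
  then show "(LINT \<xi>|lborel. g (v + \<xi>)) = (LINT \<xi>|lborel. g \<xi>)" by (simp add: lborel_distr_plus)
qed

definition ee :: "'a::euclidean_space \<Rightarrow> 'a \<Rightarrow> complex" where
  "ee w \<xi> = exp (\<i> * complex_of_real (w \<bullet> \<xi>))"

lemma ee_norm[simp]: "norm (ee w \<xi>) = 1"
  unfolding ee_def by (simp add: norm_exp_i_times)

lemma ee_cont: "continuous_on UNIV (ee w)"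
  unfolding ee_def by (intro continuous_intros)

lemma ee_meas[measurable]: "ee w \<in> borel_measurable borel"
  by (rule borel_measurable_continuous_onI[OF ee_cont])

lemma ee_mult_integrable:
  fixes g :: "'a::euclidean_space \<Rightarrow> complex"
  assumes "integrable lborel g"
  shows "integrable lborel (\<lambda>\<xi>. ee w \<xi> * g \<xi>)"
proof (rule Bochner_Integration.integrable_bound[OF assms])
  have "g \<in> borel_measurable borel" using borel_measurable_integrable[OF assms] by simp
  then show "(\<lambda>\<xi>. ee w \<xi> * g \<xi>) \<in> borel_measurable lborel" by simp
qed (simp add: norm_mult)

lemma ee_shift_half:
  fixes g :: "'a::euclidean_space \<Rightarrow> complex"
  assumes g: "integrable lborel g" and wh: "(w \<bullet> b) * h = pi"
  shows "(LINT \<xi>|lborel. ee w \<xi> * g (\<xi> + h *\<^sub>R b)) = - (LINT \<xi>|lborel. ee w \<xi> * g \<xi>)"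
proof -
  let ?F = "\<lambda>\<eta>. ee w (\<eta> - h *\<^sub>R b) * g \<eta>"
  have eq: "ee w (\<eta> - h *\<^sub>R b) = - ee w \<eta>" for \<eta>
  proof -
    have "ee w (\<eta> - h *\<^sub>R b) = ee w \<eta> * exp (- (\<i> * complex_of_real pi))"
      unfolding ee_def using wh
      by (simp add: inner_diff_right exp_add[symmetric] algebra_simps mult.commute)
    moreover have "exp (- (\<i> * complex_of_real pi)) = -1"
      by (simp add: exp_minus mult.commute exp_pi_i)
    ultimately show ?thesis by simp
  qed
  have Fi: "integrable lborel ?F" unfolding eq using ee_mult_integrable[OF g, of w] by simp
  have "(LINT \<xi>|lborel. ee w \<xi> * g (\<xi> + h *\<^sub>R b)) = (LINT \<xi>|lborel. ?F (h *\<^sub>R b + \<xi>))"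
    by (simp add: add.commute)
  also have "\<dots> = (LINT \<xi>|lborel. ?F \<xi>)" by (rule lborel_shift(2)[OF Fi])
  also have "\<dots> = - (LINT \<xi>|lborel. ee w \<xi> * g \<xi>)" unfolding eq by simp
  finally show ?thesis .
qed

lemma fd_fourier:
  fixes g :: "'a::euclidean_space \<Rightarrow> complex"
  assumes wh: "(w \<bullet> b) * h = pi"
  shows "integrable lborel g \<Longrightarrow> integrable lborel (\<lambda>\<xi>. fd k h (\<lambda>r. g (\<xi> + r *\<^sub>R b))) \<and>
    (LINT \<xi>|lborel. ee w \<xi> * fd k h (\<lambda>r. g (\<xi> + r *\<^sub>R b))) = 2 ^ k * (LINT \<xi>|lborel. ee w \<xi> * g \<xi>)"
proof (induction k arbitrary: g)
  case 0
  then show ?case by simp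
next
  case (Suc k)
  define g' where "g' \<zeta> = g \<zeta> - g (\<zeta> + h *\<^sub>R b)" for \<zeta>
  have gs: "integrable lborel (\<lambda>\<zeta>. g (\<zeta> + h *\<^sub>R b))"
    using lborel_shift(1)[OF Suc.prems, of "h *\<^sub>R b"] by (simp add: add.commute)
  have g'i: "integrable lborel g'" unfolding g'_def using Suc.prems gs by simp
  have eq: "fd (Suc k) h (\<lambda>r. g (\<xi> + r *\<^sub>R b)) = fd k h (\<lambda>r. g' (\<xi> + r *\<^sub>R b))" for \<xi>
    by (simp add: g'_def scaleR_left_distrib add.assoc)
  have "(LINT \<xi>|lborel. ee w \<xi> * g' \<xi>) = (LINT \<xi>|lborel. ee w \<xi> * g \<xi>) - (LINT \<xi>|lborel. ee w \<xi> * g (\<xi> + h *\<^sub>R b))"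
    unfolding g'_def right_diff_distrib
    by (rule Bochner_Integration.integral_diff) (use ee_mult_integrable[OF Suc.prems] ee_mult_integrable[OF gs] in auto)
  also have "\<dots> = 2 * (LINT \<xi>|lborel. ee w \<xi> * g \<xi>)" using ee_shift_half[OF Suc.prems wh] by simp
  finally have "(LINT \<xi>|lborel. ee w \<xi> * g' \<xi>) = 2 * (LINT \<xi>|lborel. ee w \<xi> * g \<xi>)" .
  then show ?case unfolding eq using Suc.IH[OF g'i] by simp
qed

lemma jbr_sq: "(jbr v)\<^sup>2 = 1 + (norm v)\<^sup>2"
  unfolding jbr_def by (simp add: add_nonneg_nonneg)

lemma jbr_ge1: "1 \<le> jbr v"
  unfolding jbr_def by simp

lemma jbr_pos: "0 < jbr v"
  using jbr_ge1[of v] by linarith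

lemma norm_le_jbr: "norm v \<le> jbr v"
  unfolding jbr_def by (rule real_le_rsqrt) simp

lemma jbr_le: "jbr v \<le> 1 + norm v"
proof -
  have "1 + (norm v)\<^sup>2 \<le> (1 + norm v)\<^sup>2" by (simp add: power2_eq_square algebra_simps)
  then show ?thesis unfolding jbr_def by (rule real_le_lsqrt[rotated]) simp
qed
lemma jbr_mono: "norm u \<le> norm v \<Longrightarrow> jbr u \<le> jbr v"
  unfolding jbr_def by (simp add: power_mono)

lemma jbr_minus[simp]: "jbr (- v) = jbr v"
  unfolding jbr_def by simp
lemma jbr_add: "jbr (x + y) \<le> sqrt 2 * jbr x * jbr y"
proof -
  have "(norm (x + y))\<^sup>2 \<le> (norm x + norm y)\<^sup>2"
    by (simp add: norm_triangle_ineq power_mono)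
  also have "\<dots> \<le> 2 * (norm x)\<^sup>2 + 2 * (norm y)\<^sup>2"
    using sum_squares_bound[of "norm x" "norm y"] by (simp add: power2_sum)
  finally have 1: "(norm (x + y))\<^sup>2 \<le> 2 * (norm x)\<^sup>2 + 2 * (norm y)\<^sup>2" .
  have 2: "0 \<le> (norm x)\<^sup>2 * (norm y)\<^sup>2" by simp
  have "1 + (norm (x + y))\<^sup>2 \<le> 2 * ((1 + (norm x)\<^sup>2) * (1 + (norm y)\<^sup>2))"
    using 1 2 unfolding distrib_left distrib_right by linarith
  then have "sqrt (1 + (norm (x + y))\<^sup>2) \<le> sqrt (2 * ((1 + (norm x)\<^sup>2) * (1 + (norm y)\<^sup>2)))"
    by (rule real_sqrt_le_mono)
  also have "\<dots> = sqrt 2 * sqrt (1 + (norm x)\<^sup>2) * sqrt (1 + (norm y)\<^sup>2)"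
    by (simp only: real_sqrt_mult mult.assoc)
  finally show ?thesis unfolding jbr_def .
qed

lemma wt_jbr: "wt (z::'c::euclidean_space) = inverse (jbr z ^ (2 * DIM('c)))"
  unfolding wt_def by (simp add: power_mult jbr_sq)

lemma schwartz_boundN:
  assumes "a \<in> schwartz" "set vs \<subseteq> Basis"
  shows "\<exists>C. \<forall>x. jbr x ^ N * norm (iter_deriv vs a x) \<le> C"
  using assms unfolding schwartz_def by blast

lemma schwartz_bound:
  assumes "a \<in> schwartz" "set vs \<subseteq> Basis"
  shows "\<exists>C. \<forall>x. norm (iter_deriv vs a x) \<le> C * wt x"
proof -
  obtain C where C: "\<And>x. jbr x ^ (2 * DIM('a)) * norm (iter_deriv vs a x) \<le> C"
    using schwartz_boundN[OF assms] by blast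
  have "norm (iter_deriv vs a x) \<le> C * wt x" for x
  proof -
    have p: "0 < jbr x ^ (2 * DIM('a))" using jbr_pos[of x] by (rule zero_less_power)
    show ?thesis unfolding wt_jbr using C[of x] p by (simp add: field_simps)
  qed
  then show ?thesis by blast
qed

lemma schwartz_diff:
  assumes "a \<in> schwartz" "set vs \<subseteq> Basis"
  shows "iter_deriv vs a differentiable (at x)"
  using assms unfolding schwartz_def smooth_fun_def by blast

lemma schwartz_cont:
  assumes "a \<in> schwartz" "set vs \<subseteq> Basis"
  shows "continuous_on UNIV (iter_deriv vs a)"
  using schwartz_diff[OF assms] by (intro continuous_at_imp_continuous_on ballI differentiable_imp_continuous_within) auto

lemma schwartz_integrable:
  assumes "a \<in> schwartz"
  shows "integrable lborel a"
proof -
  obtain C where C: "\<And>x. norm (iter_deriv [] a x) \<le> C * wt x" using schwartz_bound[OF assms, of "[]"] by auto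
  have m: "a \<in> borel_measurable borel"
    using borel_measurable_continuous_onI[OF schwartz_cont[OF assms, of "[]"]] by simp
  show ?thesis
  proof (rule Bochner_Integration.integrable_bound[where f="\<lambda>x. C * wt x"])
    show "integrable lborel (\<lambda>x. C * wt x)" by (intro integrable_mult_right wt_integrable)
    show "a \<in> borel_measurable lborel" using m by simp
    show "AE x in lborel. norm (a x) \<le> norm (C * wt x)"
      using C by (intro AE_I2) (smt (verit) iter_deriv.simps(1) real_norm_def)
  qed
qed

lemma iter_deriv_line:
  fixes a :: "'a::euclidean_space \<Rightarrow> complex"
  assumes "a \<in> schwartz" "b \<in> Basis"
  shows "((\<lambda>r. iter_deriv (replicate j b) a (\<xi> + r *\<^sub>R b)) has_vector_derivative
          iter_deriv (replicate (Suc j) b) a (\<xi> + r *\<^sub>R b)) (at r)"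
proof -
  let ?F = "iter_deriv (replicate j b) a" and ?p = "\<xi> + r *\<^sub>R b"
  have "?F differentiable (at ?p)" by (rule schwartz_diff[OF assms(1)]) (use assms(2) in auto)
  then have dF: "(?F has_derivative frechet_derivative ?F (at ?p)) (at ?p)"
    by (rule frechet_derivative_works[THEN iffD1])
  have dl: "((\<lambda>r. \<xi> + r *\<^sub>R b) has_derivative (\<lambda>t. t *\<^sub>R b)) (at r)"
    by (auto intro!: derivative_eq_intros)
  have "((\<lambda>r. ?F (\<xi> + r *\<^sub>R b)) has_derivative (\<lambda>t. frechet_derivative ?F (at ?p) (t *\<^sub>R b))) (at r)"
    using has_derivative_compose[OF dl dF] by (simp add: o_def)
  moreover have "frechet_derivative ?F (at ?p) (t *\<^sub>R b) = t *\<^sub>R frechet_derivative ?F (at ?p) b" for t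
    using has_derivative_bounded_linear[OF dF] by (simp add: bounded_linear.linear linear_scale)
  ultimately show ?thesis unfolding has_vector_derivative_def by simp
qed

lemma fourier_decay_b:
  fixes a :: "'a::euclidean_space \<Rightarrow> complex"
  assumes a: "a \<in> schwartz" and b: "b \<in> Basis"
  shows "\<exists>C. \<forall>w. 1 \<le> \<bar>w \<bullet> b\<bar> \<longrightarrow> \<bar>w \<bullet> b\<bar> ^ k * norm (LINT \<xi>|lborel. ee w \<xi> * a \<xi>) \<le> C"
proof -
  define N where "N = 2 * DIM('a)"
  have sb: "set (replicate k b) \<subseteq> Basis" using b by auto
  obtain Cs where Cs: "\<And>x. jbr x ^ N * norm (iter_deriv (replicate k b) a x) \<le> Cs"
    using schwartz_boundN[OF a sb] by blast
  define Q where "Q = (sqrt 2 * (1 + real k * pi)) ^ N"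
  define K0 where "K0 = Q * Cs"
  define W where "W = (LINT \<xi>|lborel. wt (\<xi>::'a))"
  have nb: "norm b = 1" using b by simp
  have Cs0: "0 \<le> Cs" using Cs[of 0] by (smt (verit) mult_nonneg_nonneg norm_ge_zero jbr_pos zero_le_power)
  have Q0: "0 \<le> Q" unfolding Q_def by simp
  have W0: "0 \<le> W" unfolding W_def by (rule integral_nonneg_AE) (simp add: wt_pos less_imp_le)
  have "\<bar>w \<bullet> b\<bar> ^ k * norm (LINT \<xi>|lborel. ee w \<xi> * a \<xi>) \<le> K0 * W * (pi / 2) ^ k"
    if t1: "1 \<le> \<bar>w \<bullet> b\<bar>" for w
  proof -
    define t where "t = w \<bullet> b"
    define h where "h = pi / t"
    have t0: "t \<noteq> 0" using t1 t_def by auto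
    have th: "t * h = pi" using t0 by (simp add: h_def)
    have wh: "(w \<bullet> b) * h = pi" using th t_def by simp
    have habs: "\<bar>t\<bar> * \<bar>h\<bar> = pi" using th by (metis abs_mult abs_of_nonneg pi_ge_zero)
    have hle: "\<bar>h\<bar> \<le> pi"
    proof -
      have "\<bar>h\<bar> \<le> \<bar>t\<bar> * \<bar>h\<bar>" using t1 t_def by (simp add: mult_le_cancel_right1)
      then show ?thesis using habs by simp
    qed
    define fdf where "fdf \<xi> = fd k h (\<lambda>r. a (\<xi> + r *\<^sub>R b))" for \<xi>
    have pw: "norm (fdf \<xi>) \<le> (K0 * wt \<xi>) * \<bar>h\<bar> ^ k" for \<xi>
    proof -
      define f where "f j r = iter_deriv (replicate j b) a (\<xi> + r *\<^sub>R b)" for j r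
      have "norm (fd k h (f 0)) \<le> (K0 * wt \<xi>) * \<bar>h\<bar> ^ k"
      proof (rule fd_bound)
        show "(f j has_vector_derivative f (Suc j) r) (at r)" for j r
          unfolding f_def[abs_def] by (rule iter_deriv_line[OF a b])
      next
        fix r assume r: "\<bar>r\<bar> \<le> real k * \<bar>h\<bar>"
        define \<zeta> where "\<zeta> = \<xi> + r *\<^sub>R b"
        have "jbr (- (r *\<^sub>R b)) \<le> 1 + real k * pi"
        proof -
          have "jbr (- (r *\<^sub>R b)) \<le> 1 + \<bar>r\<bar>" using jbr_le[of "- (r *\<^sub>R b)"] nb by simp
          also have "\<dots> \<le> 1 + real k * pi" using r hle by (smt (verit) mult_left_mono of_nat_0_le_iff)
          finally show ?thesis .
        qed
        moreover have "jbr \<xi> \<le> sqrt 2 * jbr \<zeta> * jbr (- (r *\<^sub>R b))"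
          using jbr_add[of \<zeta> "- (r *\<^sub>R b)"] by (simp add: \<zeta>_def)
        ultimately have "jbr \<xi> \<le> sqrt 2 * (1 + real k * pi) * jbr \<zeta>"
          by (smt (verit) jbr_pos mult_left_mono mult.commute mult.left_commute real_sqrt_ge_zero)
        then have "jbr \<xi> ^ N \<le> Q * jbr \<zeta> ^ N"
          unfolding Q_def by (metis jbr_pos less_imp_le power_mono power_mult_distrib)
        then have "jbr \<xi> ^ N * norm (f k r) \<le> Q * (jbr \<zeta> ^ N * norm (f k r))"
          using mult_right_mono[OF _ norm_ge_zero, of "jbr \<xi> ^ N" "Q * jbr \<zeta> ^ N" "f k r"] by (simp add: mult.assoc)
        also have "\<dots> \<le> Q * Cs" using Cs[of \<zeta>] Q0 unfolding f_def \<zeta>_def by (simp add: mult_left_mono)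
        finally have "jbr \<xi> ^ N * norm (f k r) \<le> K0" by (simp add: K0_def)
        moreover have "0 < jbr \<xi> ^ N" using jbr_pos[of \<xi>] by (rule zero_less_power)
        ultimately show "norm (f k r) \<le> K0 * wt \<xi>"
          unfolding wt_jbr N_def[symmetric] by (simp add: field_simps)
      qed
      moreover have "f 0 = (\<lambda>r. a (\<xi> + r *\<^sub>R b))" by (simp add: f_def[abs_def])
      ultimately show ?thesis by (simp add: fdf_def)
    qed
    from fd_fourier[OF wh schwartz_integrable[OF a], of k]
    have fi: "integrable lborel fdf" and fe: "(LINT \<xi>|lborel. ee w \<xi> * fdf \<xi>) = 2 ^ k * (LINT \<xi>|lborel. ee w \<xi> * a \<xi>)"
      by (simp_all add: fdf_def[abs_def])
    have "2 ^ k * norm (LINT \<xi>|lborel. ee w \<xi> * a \<xi>) = norm (LINT \<xi>|lborel. ee w \<xi> * fdf \<xi>)"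
      by (simp add: fe norm_mult norm_power)
    also have "\<dots> \<le> (LINT \<xi>|lborel. norm (ee w \<xi> * fdf \<xi>))" by (rule integral_norm_bound)
    also have "\<dots> = (LINT \<xi>|lborel. norm (fdf \<xi>))" by (simp add: norm_mult)
    also have "\<dots> \<le> (LINT \<xi>|lborel. (K0 * \<bar>h\<bar> ^ k) * wt (\<xi>::'a))"
      by (rule Bochner_Integration.integral_mono)
         (use fi pw in \<open>auto intro!: integrable_mult_right wt_integrable simp: mult_ac\<close>)
    also have "\<dots> = K0 * \<bar>h\<bar> ^ k * W" by (simp add: W_def)
    finally have 1: "2 ^ k * norm (LINT \<xi>|lborel. ee w \<xi> * a \<xi>) \<le> K0 * \<bar>h\<bar> ^ k * W" .
    have "\<bar>w \<bullet> b\<bar> ^ k * norm (LINT \<xi>|lborel. ee w \<xi> * a \<xi>) * 2 ^ k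
       = \<bar>t\<bar> ^ k * (2 ^ k * norm (LINT \<xi>|lborel. ee w \<xi> * a \<xi>))" by (simp add: t_def)
    also have "\<dots> \<le> \<bar>t\<bar> ^ k * (K0 * \<bar>h\<bar> ^ k * W)" using 1 by (simp add: mult_left_mono)
    also have "\<dots> = K0 * W * (\<bar>t\<bar> * \<bar>h\<bar>) ^ k" by (simp add: power_mult_distrib)
    also have "\<dots> = K0 * W * pi ^ k" using habs by simp
    finally show ?thesis by (simp add: field_simps power_divide)
  qed
  then show ?thesis by blast
qed

lemma exists_big_coord:
  fixes w :: "'a::euclidean_space"
  shows "\<exists>b\<in>Basis. norm w \<le> real DIM('a) * \<bar>w \<bullet> b\<bar>"
proof -
  let ?m = "Max ((\<lambda>b. \<bar>w \<bullet> b\<bar>) ` (Basis::'a set))"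
  have "?m \<in> (\<lambda>b. \<bar>w \<bullet> b\<bar>) ` Basis" by (rule Max_in) auto
  then obtain b where b: "b \<in> Basis" "?m = \<bar>w \<bullet> b\<bar>" by (metis (no_types, lifting) imageE)
  have "norm w \<le> (\<Sum>b\<in>Basis. \<bar>w \<bullet> b\<bar>)" by (rule norm_le_l1)
  also have "\<dots> \<le> of_nat (card (Basis::'a set)) * ?m"
    by (rule sum_bounded_above) auto
  finally show ?thesis using b by auto
qed

lemma fourier_decay:
  fixes a :: "'a::euclidean_space \<Rightarrow> complex"
  assumes a: "a \<in> schwartz"
  shows "\<exists>C. \<forall>w. jbr w ^ k * norm (LINT \<xi>|lborel. ee w \<xi> * a \<xi>) \<le> C"
proof -
  let ?I = "\<lambda>w. norm (LINT \<xi>|lborel. ee w \<xi> * a \<xi>)"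
  have "\<forall>b\<in>Basis. \<exists>C. \<forall>w. 1 \<le> \<bar>w \<bullet> b\<bar> \<longrightarrow> \<bar>w \<bullet> b\<bar> ^ k * ?I w \<le> C"
    using fourier_decay_b[OF a] by blast
  then obtain Cf where Cf: "\<And>b w. b \<in> Basis \<Longrightarrow> 1 \<le> \<bar>w \<bullet> b\<bar> \<Longrightarrow> \<bar>w \<bullet> b\<bar> ^ k * ?I w \<le> Cf b"
    by metis
  define S where "S = (\<Sum>b\<in>(Basis::'a set). \<bar>Cf b\<bar>)"
  define C0 where "C0 = (LINT \<xi>|lborel. norm (a \<xi>))"
  define n where "n = real DIM('a)"
  have ai: "integrable lborel a" by (rule schwartz_integrable[OF a])
  have I0: "?I w \<le> C0" for w
  proof -
    have "?I w \<le> (LINT \<xi>|lborel. norm (ee w \<xi> * a \<xi>))" by (rule integral_norm_bound)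
    then show ?thesis by (simp add: norm_mult C0_def)
  qed
  have S0: "0 \<le> S" unfolding S_def by (simp add: sum_nonneg)
  have n1: "1 \<le> n" unfolding n_def by (simp add: DIM_positive Suc_le_eq)
  have "jbr w ^ k * ?I w \<le> (n + 1) ^ k * (S + C0)" for w
  proof -
    obtain b where b: "b \<in> Basis" "norm w \<le> n * \<bar>w \<bullet> b\<bar>" using exists_big_coord[of w] n_def by auto
    have Iw0: "0 \<le> ?I w" by simp
    have C00: "0 \<le> C0" using I0[of w] Iw0 by linarith
    show ?thesis
    proof (cases "1 \<le> \<bar>w \<bullet> b\<bar>")
      case True
      have "jbr w \<le> 1 + norm w" by (rule jbr_le)
      also have "\<dots> \<le> (n + 1) * \<bar>w \<bullet> b\<bar>" using b True by (simp add: algebra_simps)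
      finally have "jbr w ^ k \<le> ((n + 1) * \<bar>w \<bullet> b\<bar>) ^ k"
        using jbr_pos[of w] by (intro power_mono) auto
      then have "jbr w ^ k * ?I w \<le> ((n + 1) ^ k * \<bar>w \<bullet> b\<bar> ^ k) * ?I w"
        by (intro mult_right_mono[OF _ Iw0]) (simp add: power_mult_distrib)
      then have "jbr w ^ k * ?I w \<le> (n + 1) ^ k * (\<bar>w \<bullet> b\<bar> ^ k * ?I w)"
        by (simp add: mult.assoc)
      also have "\<dots> \<le> (n + 1) ^ k * Cf b" using Cf[OF b(1) True] n1 by (simp add: mult_left_mono)
      also have "\<dots> \<le> (n + 1) ^ k * (S + C0)"
      proof -
        have "Cf b \<le> \<bar>Cf b\<bar>" by simp
        also have "\<dots> \<le> S" unfolding S_def using b(1) by (intro member_le_sum) auto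
        finally show ?thesis using C00 n1 by (intro mult_left_mono) auto
      qed
      finally show ?thesis .
    next
      case False
      have "jbr w \<le> 1 + norm w" by (rule jbr_le)
      also have "\<dots> \<le> n + 1" using b False n1
        by (smt (verit) mult_left_le)
      finally have "jbr w ^ k \<le> (n + 1) ^ k"
        using jbr_pos[of w] by (intro power_mono) auto
      then have "jbr w ^ k * ?I w \<le> (n + 1) ^ k * C0"
        using I0[of w] Iw0 by (meson mult_mono order_trans jbr_pos less_imp_le zero_le_power)
      also have "\<dots> \<le> (n + 1) ^ k * (S + C0)" using S0 n1 by (intro mult_left_mono) auto
      finally show ?thesis .
    qed
  qed
  then show ?thesis by blast
qed

lemma inv_fourier_decay:
  fixes a :: "'a::euclidean_space \<Rightarrow> complex"
  assumes a: "a \<in> schwartz"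
  shows "\<exists>C. \<forall>w. jbr w ^ k * norm (inv_fourier a w) \<le> C"
proof -
  obtain C where C: "\<And>w. jbr w ^ k * norm (LINT \<xi>|lborel. ee w \<xi> * a \<xi>) \<le> C"
    using fourier_decay[OF a] by blast
  have "jbr w ^ k * norm (inv_fourier a w) \<le> C / (2 * pi) ^ DIM('a)" for w
    using C[of w] unfolding inv_fourier_def ee_def
    by (simp add: norm_divide norm_mult norm_power divide_right_mono)
  then show ?thesis by blast
qed

lemma inv_fourier_cont:
  fixes a :: "'a::euclidean_space \<Rightarrow> complex"
  assumes a: "a \<in> schwartz"
  shows "continuous_on UNIV (inv_fourier a)"
proof -
  have ai: "integrable lborel a" by (rule schwartz_integrable[OF a])
  have am: "a \<in> borel_measurable borel" using borel_measurable_integrable[OF ai] by simp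
  have "continuous_on UNIV (\<lambda>w. LINT \<xi>|lborel. ee w \<xi> * a \<xi>)"
  proof (rule continuous_on_sequentiallyI)
    fix u and w0 :: 'a assume u: "u \<longlonglongrightarrow> w0"
    show "(\<lambda>n. LINT \<xi>|lborel. ee (u n) \<xi> * a \<xi>) \<longlonglongrightarrow> (LINT \<xi>|lborel. ee w0 \<xi> * a \<xi>)"
    proof (rule integral_dominated_convergence[where w="\<lambda>\<xi>. norm (a \<xi>)"])
      show "AE \<xi> in lborel. (\<lambda>n. ee (u n) \<xi> * a \<xi>) \<longlonglongrightarrow> ee w0 \<xi> * a \<xi>"
        unfolding ee_def by (intro AE_I2 tendsto_intros u)
    qed (use am ai in \<open>auto simp: norm_mult\<close>)
  qed
  then show ?thesis unfolding inv_fourier_def ee_def by (intro continuous_intros) auto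
qed

lemma jbr_pair: "jbr (x, y) \<le> sqrt 3 * jbr x * jbr (x - y)"
proof -
  have 1: "(norm y)\<^sup>2 \<le> 2 * (norm x)\<^sup>2 + 2 * (norm (x - y))\<^sup>2"
  proof -
    have "norm y \<le> norm x + norm (x - y)" by (metis norm_triangle_sub add.commute norm_minus_commute)
    then have "(norm y)\<^sup>2 \<le> (norm x + norm (x - y))\<^sup>2" by (simp add: power_mono)
    also have "\<dots> \<le> 2 * (norm x)\<^sup>2 + 2 * (norm (x - y))\<^sup>2"
      using sum_squares_bound[of "norm x" "norm (x - y)"] by (simp add: power2_sum)
    finally show ?thesis .
  qed
  have 2: "0 \<le> (norm x)\<^sup>2 * (norm (x - y))\<^sup>2" by simp
  have eq: "3 * ((1 + (norm x)\<^sup>2) * (1 + (norm (x - y))\<^sup>2)) = 3 + 3 * (norm x)\<^sup>2 + 3 * (norm (x - y))\<^sup>2 + 3 * ((norm x)\<^sup>2 * (norm (x - y))\<^sup>2)"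
    by (simp add: algebra_simps)
  have eq2: "(norm (x, y))\<^sup>2 = (norm x)\<^sup>2 + (norm y)\<^sup>2" unfolding norm_Pair by simp
  have "1 + (norm (x, y))\<^sup>2 \<le> 3 * ((1 + (norm x)\<^sup>2) * (1 + (norm (x - y))\<^sup>2))"
    unfolding eq eq2 using 1 2 zero_le_power2[of "norm x"] zero_le_power2[of "norm (x - y)"] by linarith
  then have "sqrt (1 + (norm (x, y))\<^sup>2) \<le> sqrt (3 * ((1 + (norm x)\<^sup>2) * (1 + (norm (x - y))\<^sup>2)))"
    by (rule real_sqrt_le_mono)
  also have "\<dots> = sqrt 3 * sqrt (1 + (norm x)\<^sup>2) * sqrt (1 + (norm (x - y))\<^sup>2)"
    by (simp only: real_sqrt_mult mult.assoc)
  finally show ?thesis unfolding jbr_def .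
qed

lemma jbr_lin: assumes "norm v \<le> R1 * norm u" "1 \<le> R1" shows "jbr v \<le> R1 * jbr u"
proof -
  have "(norm v)\<^sup>2 \<le> (R1 * norm u)\<^sup>2" using assms(1) by (simp add: power_mono)
  moreover have "1 \<le> R1\<^sup>2" using assms(2) by (simp add: one_le_power)
  ultimately have "1 + (norm v)\<^sup>2 \<le> R1\<^sup>2 * (1 + (norm u)\<^sup>2)"
    by (simp add: power_mult_distrib algebra_simps)
  then have "sqrt (1 + (norm v)\<^sup>2) \<le> sqrt (R1\<^sup>2 * (1 + (norm u)\<^sup>2))" by (rule real_sqrt_le_mono)
  also have "\<dots> = R1 * sqrt (1 + (norm u)\<^sup>2)" using assms(2) by (simp add: real_sqrt_mult)
  finally show ?thesis unfolding jbr_def .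
qed

lemma symbol_bound:
  fixes c :: "'c::euclidean_space \<Rightarrow> complex"
  assumes "c \<in> symbol_class_inf"
  shows "\<exists>Cc M. 0 \<le> Cc \<and> (\<forall>z. norm (c z) \<le> Cc * jbr z ^ M)"
proof -
  obtain m where "c \<in> symbol_class m" using assms unfolding symbol_class_inf_def by blast
  then have "\<forall>vs. set vs \<subseteq> Basis \<longrightarrow> (\<exists>C. \<forall>v. norm (iter_deriv vs c v) \<le> C * jbr v powr (m - real (length vs)))"
    unfolding symbol_class_def by blast
  from this[rule_format, of "[]"] have "\<exists>C. \<forall>v. norm (iter_deriv [] c v) \<le> C * jbr v powr m"
    by simp
  then obtain C where C: "\<And>v. norm (c v) \<le> C * jbr v powr m" by auto
  define M where "M = nat \<lceil>m\<rceil>"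
  have mM: "m \<le> real M"
  proof -
    have "m \<le> of_int \<lceil>m\<rceil>" by (rule le_of_int_ceiling)
    also have "\<dots> \<le> real M" unfolding M_def by linarith
    finally show ?thesis .
  qed
  have C0: "0 \<le> C"
  proof -
    have "0 \<le> C * jbr (0::'c) powr m" using C[of 0] norm_ge_zero[of "c 0"] by linarith
    then show ?thesis using jbr_pos[of "0::'c"] by (simp add: zero_le_mult_iff)
  qed
  have "norm (c z) \<le> C * jbr z ^ M" for z
  proof -
    have "norm (c z) \<le> C * jbr z powr m" using C[of z] by simp
    also have "\<dots> \<le> C * jbr z powr (real M)"
      using C0 jbr_ge1[of z] mM by (intro mult_left_mono powr_mono) auto
    also have "\<dots> = C * jbr z ^ M" using jbr_pos[of z] by (simp add: powr_realpow)
    finally show ?thesis .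
  qed
  then show ?thesis using C0 by blast
qed

lemma symbol_cont:
  fixes c :: "'c::euclidean_space \<Rightarrow> complex"
  assumes "c \<in> symbol_class_inf"
  shows "continuous_on UNIV c"
proof -
  obtain m where "c \<in> symbol_class m" using assms unfolding symbol_class_inf_def by blast
  then have "\<forall>vs. set vs \<subseteq> Basis \<longrightarrow> (\<forall>x. iter_deriv vs c differentiable (at x))"
    unfolding symbol_class_def smooth_fun_def by blast
  then have "\<forall>x. iter_deriv [] c differentiable (at x)" by (metis empty_subsetI set_empty)
  then show ?thesis by (intro continuous_at_imp_continuous_on ballI differentiable_imp_continuous_within) auto
qed

lemma kernel_bound:
  fixes a :: "'a::euclidean_space \<Rightarrow> complex"
  assumes a: "a \<in> schwartz" and b: "b \<in> schwartz" and c: "c \<in> symbol_class_inf"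
  shows "\<exists>G. \<forall>\<tau> z. norm \<tau> \<le> R \<longrightarrow> jbr z ^ (2 * DIM('a)) * norm (kernelK a b c \<tau> z) \<le> G"
proof -
  obtain Cc M where Cc0: "0 \<le> Cc" and Cc: "\<And>z. norm (c z) \<le> Cc * jbr z ^ M"
    using symbol_bound[OF c] by blast
  define L where "L = 2 * DIM('a) + M"
  obtain A where A: "\<And>w. jbr w ^ L * norm (inv_fourier a w) \<le> A"
    using inv_fourier_decay[OF a] by blast
  obtain B where B: "\<And>u. jbr u ^ (2 * L) * norm (iter_deriv [] b u) \<le> B"
    using schwartz_boundN[OF b, of "[]"] by auto
  have A0: "0 \<le> A" using A[of 0] by (smt (verit) jbr_pos norm_ge_zero zero_le_mult_iff zero_le_power)
  have B0: "0 \<le> B" using B[of 0] by (smt (verit) jbr_pos norm_ge_zero zero_le_mult_iff zero_le_power)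
  define R1 where "R1 = max 1 R"
  define P where "P = sqrt 2 * R1"
  define S where "S = sqrt 3 * P"
  have S0: "0 \<le> S" unfolding S_def P_def R1_def by simp
  have "jbr z ^ (2 * DIM('a)) * norm (kernelK a b c \<tau> z) \<le> Cc * (S ^ L * (A * B))" if \<tau>R: "norm \<tau> \<le> R" for \<tau> z
  proof -
    obtain x y where z: "z = (x, y)" by (cases z)
    define u where "u = x - y"
    define w where "w = x - \<tau> x + \<tau> y"
    have wu: "x = w + \<tau> u" by (simp add: w_def u_def blinfun.diff_right)
    let ?X = "jbr x" and ?U = "jbr u" and ?W = "jbr w" and ?Z = "jbr z"
    have h1: "?Z \<le> sqrt 3 * ?X * ?U" unfolding z u_def by (rule jbr_pair)
    have "jbr (\<tau> u) \<le> R1 * ?U"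
    proof (rule jbr_lin)
      have "norm (\<tau> u) \<le> norm \<tau> * norm u" by (rule norm_blinfun)
      also have "\<dots> \<le> R1 * norm u" using \<tau>R by (intro mult_right_mono) (auto simp: R1_def)
      finally show "norm (\<tau> u) \<le> R1 * norm u" .
    qed (simp add: R1_def)
    moreover have "?X \<le> sqrt 2 * ?W * jbr (\<tau> u)" unfolding wu by (rule jbr_add)
    ultimately have h2: "?X \<le> P * ?W * ?U"
      unfolding P_def using jbr_pos[of w]
      by (smt (verit) mult_left_mono mult.assoc mult.commute real_sqrt_ge_zero)
    have h3: "?Z \<le> S * ?W * ?U ^ 2"
    proof -
      have "sqrt 3 * ?X * ?U \<le> sqrt 3 * (P * ?W * ?U) * ?U"
        using h2 jbr_pos[of u] by (intro mult_right_mono mult_left_mono) auto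
      then show ?thesis using h1 by (simp add: S_def power2_eq_square mult_ac)
    qed
    have h4: "?Z ^ L \<le> S ^ L * (?W ^ L * ?U ^ (2 * L))"
    proof -
      have "?Z ^ L \<le> (S * ?W * ?U ^ 2) ^ L" using h3 jbr_pos[of z] by (intro power_mono) auto
      then show ?thesis by (simp add: power_mult_distrib power_mult[symmetric] mult.commute)
    qed
    let ?bu = "norm (b u)" and ?Fw = "norm (inv_fourier a w)"
    have K: "norm (kernelK a b c \<tau> z) = norm (c z) * (?bu * ?Fw)"
      by (simp add: kernelK_def z u_def w_def norm_mult)
    have e1: "?Z ^ (2 * DIM('a)) * norm (kernelK a b c \<tau> z) \<le> Cc * (?Z ^ L * (?bu * ?Fw))"
    proof -
      have "norm (c z) * (?bu * ?Fw) \<le> Cc * ?Z ^ M * (?bu * ?Fw)"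
        using Cc[of z] by (intro mult_right_mono) auto
      then have "?Z ^ (2 * DIM('a)) * norm (kernelK a b c \<tau> z) \<le> ?Z ^ (2 * DIM('a)) * (Cc * ?Z ^ M * (?bu * ?Fw))"
        unfolding K using jbr_pos[of z] by (intro mult_left_mono) auto
      then show ?thesis by (simp add: L_def power_add mult_ac)
    qed
    have e2: "?Z ^ L * (?bu * ?Fw) \<le> S ^ L * ((?W ^ L * ?Fw) * (?U ^ (2 * L) * ?bu))"
    proof -
      have "?Z ^ L * (?bu * ?Fw) \<le> S ^ L * (?W ^ L * ?U ^ (2 * L)) * (?bu * ?Fw)"
        using h4 by (intro mult_right_mono) auto
      then show ?thesis by (simp add: mult_ac)
    qed
    have e3: "(?W ^ L * ?Fw) * (?U ^ (2 * L) * ?bu) \<le> A * B"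
      using A[of w] B[of u] jbr_pos[of w] jbr_pos[of u] A0 B0 by (intro mult_mono) auto
    have "?Z ^ (2 * DIM('a)) * norm (kernelK a b c \<tau> z) \<le> Cc * (S ^ L * ((?W ^ L * ?Fw) * (?U ^ (2 * L) * ?bu)))"
      using e1 e2 Cc0 by (meson mult_left_mono order_trans)
    also have "\<dots> \<le> Cc * (S ^ L * (A * B))"
      using e3 Cc0 S0 by (intro mult_left_mono) auto
    finally show ?thesis .
  qed
  then show ?thesis by blast
qed

lemma kernel_eq:
  "kernelK a b c \<tau> = (\<lambda>z. c z * b (fst z - snd z) * inv_fourier a (fst z - \<tau> (fst z) + \<tau> (snd z)))"
  by (auto simp: kernelK_def fun_eq_iff split: prod.splits)

lemma kernel_cont:
  fixes a :: "'a::euclidean_space \<Rightarrow> complex"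
  assumes a: "a \<in> schwartz" and b: "b \<in> schwartz" and c: "c \<in> symbol_class_inf"
  shows "continuous_on UNIV (kernelK a b c \<tau>)"
proof -
  have cb: "continuous_on UNIV b" using schwartz_cont[OF b, of "[]"] by simp
  have cF: "continuous_on UNIV (inv_fourier a)" by (rule inv_fourier_cont[OF a])
  have cc: "continuous_on UNIV c" by (rule symbol_cont[OF c])
  show ?thesis unfolding kernel_eq
    by (intro continuous_intros continuous_on_compose2[OF cb] continuous_on_compose2[OF cF] cc) auto
qed

lemma kernel_meas:
  fixes a :: "'a::euclidean_space \<Rightarrow> complex"
  assumes a: "a \<in> schwartz" and b: "b \<in> schwartz" and c: "c \<in> symbol_class_inf"
  shows "kernelK a b c \<tau> \<in> borel_measurable lborel"
  using borel_measurable_continuous_onI[OF kernel_cont[OF a b c]] by simp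

lemma kernel_sq_bound:
  fixes a :: "'a::euclidean_space \<Rightarrow> complex"
  assumes a: "a \<in> schwartz" and b: "b \<in> schwartz" and c: "c \<in> symbol_class_inf"
  shows "\<exists>G. 0 \<le> G \<and> (\<forall>\<tau> z. norm \<tau> \<le> R \<longrightarrow> (norm (kernelK a b c \<tau> z))\<^sup>2 \<le> G * wt z)"
proof -
  obtain G where G: "\<And>\<tau> z. norm \<tau> \<le> R \<Longrightarrow> jbr z ^ (2 * DIM('a)) * norm (kernelK a b c \<tau> z) \<le> G"
    using kernel_bound[OF a b c] by blast
  have "(norm (kernelK a b c \<tau> z))\<^sup>2 \<le> G\<^sup>2 * wt z" if "norm \<tau> \<le> R" for \<tau> z
  proof -
    let ?J = "jbr z ^ (2 * DIM('a))" and ?k = "norm (kernelK a b c \<tau> z)"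
    have J0: "0 < ?J" using jbr_pos[of z] by (rule zero_less_power)
    have "0 \<le> ?J * ?k" using J0 by simp
    then have "(?J * ?k)\<^sup>2 \<le> G\<^sup>2" using G[OF that] by (simp add: power_mono)
    then have "?k\<^sup>2 * ?J\<^sup>2 \<le> G\<^sup>2" by (simp add: power_mult_distrib mult.commute)
    moreover have "0 < ?J\<^sup>2" using J0 by (rule zero_less_power)
    ultimately have "?k\<^sup>2 \<le> G\<^sup>2 / ?J\<^sup>2" by (subst pos_le_divide_eq) auto
    moreover have "wt z = inverse (?J\<^sup>2)" unfolding wt_jbr by (simp add: power_mult[symmetric] mult.commute mult.left_commute)
    ultimately show ?thesis by (simp add: divide_inverse)
  qed
  then show ?thesis by (intro exI[of _ "G\<^sup>2"]) auto
qed

lemma kernel_L2: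
  fixes a :: "'a::euclidean_space \<Rightarrow> complex"
  assumes a: "a \<in> schwartz" and b: "b \<in> schwartz" and c: "c \<in> symbol_class_inf"
  shows "L2 (kernelK a b c \<tau>)"
proof -
  obtain G where G: "\<And>z. (norm (kernelK a b c \<tau> z))\<^sup>2 \<le> G * wt z"
    using kernel_sq_bound[OF a b c, of "norm \<tau>"] by blast
  have m: "kernelK a b c \<tau> \<in> borel_measurable lborel" by (rule kernel_meas[OF a b c])
  have "integrable lborel (\<lambda>z. (norm (kernelK a b c \<tau> z))\<^sup>2)"
  proof (rule Bochner_Integration.integrable_bound[where f="\<lambda>z. G * wt z"])
    show "integrable lborel (\<lambda>z. G * wt z)" by (intro integrable_mult_right wt_integrable)
    show "(\<lambda>z. (norm (kernelK a b c \<tau> z))\<^sup>2) \<in> borel_measurable lborel" using m by measurable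
    show "AE z in lborel. norm ((norm (kernelK a b c \<tau> z))\<^sup>2) \<le> norm (G * wt z)"
      using G by (intro AE_I2) (smt (verit) real_norm_def zero_le_power2)
  qed
  then show ?thesis using m unfolding L2_def by simp
qed

theorem mainTheorem13:
  fixes a :: "'a::euclidean_space \<Rightarrow> complex"
    and b :: "'a \<Rightarrow> complex"
    and c :: "'a \<times> 'a \<Rightarrow> complex"
  assumes "a \<in> schwartz" and "b \<in> schwartz" and "c \<in> symbol_class_inf"
  shows "(\<forall>\<tau>. L2 (kernelK a b c \<tau>)) \<and>
         (\<forall>\<tau>0. ((\<lambda>\<tau>. L2_dist (kernelK a b c \<tau>) (kernelK a b c \<tau>0)) \<longlongrightarrow> 0) (at \<tau>0))"
proof
  note abc = assms
  let ?K = "kernelK a b c"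
  show "\<forall>\<tau>. L2 (?K \<tau>)" using kernel_L2[OF abc] by blast
  show "\<forall>\<tau>0. ((\<lambda>\<tau>. L2_dist (?K \<tau>) (?K \<tau>0)) \<longlongrightarrow> 0) (at \<tau>0)"
  proof
    fix \<tau>0 :: "'a \<Rightarrow>\<^sub>L 'a"
    have cF: "continuous_on UNIV (inv_fourier a)" by (rule inv_fourier_cont[OF abc(1)])
    have lim: "((\<lambda>\<tau>. LINT z|lborel. (norm (?K \<tau> z - ?K \<tau>0 z))\<^sup>2) \<longlongrightarrow> 0) (at \<tau>0)"
      unfolding tendsto_at_iff_sequentially o_def
    proof (intro allI impI)
      fix X :: "nat \<Rightarrow> 'a \<Rightarrow>\<^sub>L 'a"
      assume X: "X \<longlonglongrightarrow> \<tau>0"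
      have "Bseq X" using X by (intro convergent_imp_Bseq convergentI)
      then obtain R where R: "\<And>i. norm (X i) \<le> R" by (metis BseqE)
      define R' where "R' = max R (norm \<tau>0)"
      obtain G where G0: "0 \<le> G" and G: "\<And>\<tau> z. norm \<tau> \<le> R' \<Longrightarrow> (norm (?K \<tau> z))\<^sup>2 \<le> G * wt z"
        using kernel_sq_bound[OF abc, of R'] by blast
      have "(\<lambda>i. LINT z|lborel. (norm (?K (X i) z - ?K \<tau>0 z))\<^sup>2) \<longlonglongrightarrow> (LINT (z::'a \<times> 'a)|lborel. 0::real)"
      proof (rule integral_dominated_convergence[where w="\<lambda>z. 4 * G * wt z"])
        show "(\<lambda>z::'a \<times> 'a. 0::real) \<in> borel_measurable lborel" by simp
        show "(\<lambda>z. (norm (?K (X i) z - ?K \<tau>0 z))\<^sup>2) \<in> borel_measurable lborel" for i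
          using kernel_meas[OF abc, of "X i"] kernel_meas[OF abc, of \<tau>0] by measurable
        show "integrable lborel (\<lambda>z. 4 * G * wt z)" by (intro integrable_mult_right wt_integrable)
        show "AE z in lborel. (\<lambda>i. (norm (?K (X i) z - ?K \<tau>0 z))\<^sup>2) \<longlonglongrightarrow> 0"
        proof (rule AE_I2)
          fix z :: "'a \<times> 'a"
          obtain x y where z: "z = (x, y)" by (cases z)
          have "(\<lambda>i. inv_fourier a (x - X i x + X i y)) \<longlonglongrightarrow> inv_fourier a (x - \<tau>0 x + \<tau>0 y)"
            by (rule continuous_on_tendsto_compose[OF cF]) (auto intro!: tendsto_intros X)
          then have "(\<lambda>i. ?K (X i) z) \<longlonglongrightarrow> ?K \<tau>0 z"
            unfolding z kernelK_def by (auto intro!: tendsto_intros)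
          then have "(\<lambda>i. (norm (?K (X i) z - ?K \<tau>0 z))\<^sup>2) \<longlonglongrightarrow> (norm (?K \<tau>0 z - ?K \<tau>0 z))\<^sup>2"
            by (intro tendsto_intros)
          then show "(\<lambda>i. (norm (?K (X i) z - ?K \<tau>0 z))\<^sup>2) \<longlonglongrightarrow> 0" by simp
        qed
        show "AE z in lborel. norm ((norm (?K (X i) z - ?K \<tau>0 z))\<^sup>2) \<le> 4 * G * wt z" for i
        proof (rule AE_I2)
          fix z
          have 1: "(norm (?K (X i) z))\<^sup>2 \<le> G * wt z" using R[of i] by (intro G) (auto simp: R'_def)
          have 2: "(norm (?K \<tau>0 z))\<^sup>2 \<le> G * wt z" by (intro G) (auto simp: R'_def)
          have "(norm (?K (X i) z - ?K \<tau>0 z))\<^sup>2 \<le> (norm (?K (X i) z) + norm (?K \<tau>0 z))\<^sup>2"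
            by (simp add: norm_triangle_ineq4 power_mono)
          also have "\<dots> \<le> 2 * (norm (?K (X i) z))\<^sup>2 + 2 * (norm (?K \<tau>0 z))\<^sup>2"
            using sum_squares_bound[of "norm (?K (X i) z)" "norm (?K \<tau>0 z)"] by (simp add: power2_sum)
          also have "\<dots> \<le> 4 * G * wt z" using 1 2 by simp
          finally show "norm ((norm (?K (X i) z - ?K \<tau>0 z))\<^sup>2) \<le> 4 * G * wt z" by simp
        qed
      qed
      then show "(\<lambda>i. LINT z|lborel. (norm (?K (X i) z - ?K \<tau>0 z))\<^sup>2) \<longlonglongrightarrow> 0" by simp
    qed
    have "((\<lambda>\<tau>. sqrt (LINT z|lborel. (norm (?K \<tau> z - ?K \<tau>0 z))\<^sup>2)) \<longlongrightarrow> sqrt 0) (at \<tau>0)"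
      by (rule tendsto_real_sqrt[OF lim])
    then show "((\<lambda>\<tau>. L2_dist (?K \<tau>) (?K \<tau>0)) \<longlongrightarrow> 0) (at \<tau>0)"
      unfolding L2_dist_def by simp
  qed
qed

end
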